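(* Let $q=p^n$ be a prime power and $d$ a positive divisor of $q-1$. Then $G(q,d)$ has a GI-automorphism (equivalently, has a GI-extension) if and only if there exists an integer $l\ge 0$ with $p^l\equiv -1 \pmod d$.
   Context: $G(q,d)$ is the group of affine maps $\{x\mapsto ax+b:\ a,b\in\mathbb{F}_q,\ a^d=1\}$ under composition; equivalently $G(q,d)\cong C_p^n\rtimes C_d$, where $C_p^n$ is the additive group of $\mathbb{F}_q$ and $C_d\le\mathbb{F}_q^\times$ acts by multiplication. A GI-automorphism of a group $G$ is an automorphism $\sigma$ such that $G$ is generated by $\{g\in G:\sigma(g)=g^{-1}\}$. Given a group $G'$ with a normal subgroup $G$ of index $2$, $G'$ is a GI-extension of $G$ if $G'$ is generated by involutions not contained in $G$. *)

theory Defs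
  imports "HOL-Algebra.Algebra" "HOL-Number_Theory.Cong"
begin

definition affine_group :: "nat \<Rightarrow> ('a::field \<Rightarrow> 'a) monoid" where
  "affine_group d = \<lparr> carrier = {f. \<exists>a b. a ^ d = 1 \<and> f = (\<lambda>x. a * x + b)},
                      monoid.mult = (\<lambda>f g. f \<circ> g),
                      one = id \<rparr>"

definition GI_automorphism :: "('g, 'b) monoid_scheme \<Rightarrow> ('g \<Rightarrow> 'g) \<Rightarrow> bool" where
  "GI_automorphism G \<sigma> \<longleftrightarrow>
     \<sigma> \<in> iso G G \<and>
     generate G {g \<in> carrier G. \<sigma> g = inv\<^bsub>G\<^esub> g} = carrier G"

end

theory Submission
  imports Defs "HOL-Computational_Algebra.Polynomial" "HOL-Computational_Algebra.Primes" "HOL-Number_Theory.Residues"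
begin

lemma char_eq_p:
  assumes "Factorial_Ring.prime p" "card (UNIV :: ('a::{finite,field}) set) = p ^ n"
  shows "CHAR('a) = p" "n \<ge> 1"
proof -
  have pos: "CHAR('a) > 0" by (simp add: finite_imp_CHAR_pos)
  have pr: "Factorial_Ring.prime CHAR('a)" using pos prime_CHAR_semidom by blast
  have "CHAR('a) dvd p ^ n" using CHAR_dvd_CARD[where 'a='a] assms(2) by simp
  hence "CHAR('a) dvd p" using pr prime_dvd_power by blast
  thus "CHAR('a) = p" using pr assms(1) primes_dvd_imp_eq by blast
  show "n \<ge> 1"
  proof (rule ccontr)
    assume "\<not> n \<ge> 1" hence "n = 0" by simp
    hence "card (UNIV :: 'a set) = 1" using assms(2) by simp
    moreover have "card {0::'a, 1} \<le> card (UNIV :: 'a set)" by (rule card_mono) auto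
    ultimately show False by simp
  qed
qed

lemma power_card_same:
  fixes x :: "'a::{finite,field}"
  shows "x ^ card (UNIV :: 'a set) = x"
proof (cases "x = 0")
  case False
  have "x * (\<Prod>y\<in>UNIV-{0}. x * y) = x * x ^ (card (UNIV :: 'a set) - 1) * \<Prod>(UNIV-{0})"
    by (simp add: prod.distrib mult_ac)
  also have "x * x ^ (card (UNIV :: 'a set) - 1) = x ^ Suc (card (UNIV :: 'a set) - 1)"
    by (subst power_Suc) auto
  also have "Suc (card (UNIV :: 'a set) - 1) = card (UNIV :: 'a set)"
    using finite_UNIV_card_ge_0[where ?'a = 'a] by simp
  also have "(\<Prod>y\<in>UNIV-{0}. x * y) = (\<Prod>y\<in>UNIV-{0}. y)"
    by (rule prod.reindex_bij_witness[of _ "\<lambda>y. y / x" "\<lambda>y. x * y"]) (use False in auto)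
  finally show ?thesis
    by simp
qed (use finite_UNIV_card_ge_0[where ?'a = 'a] in auto)


lemma frob_add:
  assumes "Factorial_Ring.prime p" "CHAR('a::{finite,field}) = p"
  shows "((x::'a) + y) ^ (p ^ m) = x ^ (p ^ m) + y ^ (p ^ m)"
  using assms by (intro freshmans_dream') auto

lemma frob_minus:
  assumes "Factorial_Ring.prime p" "CHAR('a::{finite,field}) = p"
  shows "(- (x::'a)) ^ (p ^ m) = - (x ^ (p ^ m))"
proof -
  have "(x + - x) ^ (p ^ m) = x ^ (p ^ m) + (-x) ^ (p ^ m)" by (rule frob_add[OF assms])
  moreover have "(0::'a) ^ (p ^ m) = 0" using assms(1) prime_gt_0_nat by (simp add: power_0_left)
  ultimately have "0 = x ^ (p ^ m) + (-x) ^ (p ^ m)" by simp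
  thus ?thesis by (simp add: eq_neg_iff_add_eq_0 add.commute)
qed

lemma frob_diff:
  assumes "Factorial_Ring.prime p" "CHAR('a::{finite,field}) = p"
  shows "((x::'a) - y) ^ (p ^ m) = x ^ (p ^ m) - y ^ (p ^ m)"
  using frob_add[OF assms, of x "-y"] frob_minus[OF assms, of y] by simp

lemma frob_inj:
  assumes "Factorial_Ring.prime p" "CHAR('a::{finite,field}) = p"
    and "(x::'a) ^ (p ^ m) = y ^ (p ^ m)"
  shows "x = y"
proof -
  have "(x - y) ^ (p ^ m) = 0" using frob_diff[OF assms(1,2)] assms(3) by simp
  thus ?thesis by simp
qed

lemma of_nat_pow_p:
  assumes "Factorial_Ring.prime p" "CHAR('a::{finite,field}) = p"
  shows "(of_nat k :: 'a) ^ p = of_nat k"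
proof (induction k)
  case 0 then show ?case using assms(1) prime_gt_0_nat by (simp add: power_0_left)
next
  case (Suc k)
  have "(of_nat k + 1 :: 'a) ^ (p ^ 1) = of_nat k ^ (p ^ 1) + 1 ^ (p ^ 1)"
    by (rule frob_add[OF assms])
  then show ?case using Suc by (simp add: add.commute)
qed

lemma prime_field_fixed:
  assumes "Factorial_Ring.prime p" "CHAR('a::{finite,field}) = p"
    and "(c::'a) ^ p = c"
  shows "\<exists>k. c = of_nat k"
proof -
  define P :: "'a poly" where "P = monom 1 p - [:0,1:]"
  have p2: "p \<ge> 2" using assms(1) prime_ge_2_nat by blast
  have cP: "coeff P p = 1" using p2 by (simp add: P_def coeff_monom coeff_pCons split: nat.split)
  hence Pnz: "P \<noteq> 0" by auto
  have degP: "degree P \<le> p"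
  proof -
    have "degree P \<le> max (degree (monom (1::'a) p)) (degree [:0,1::'a:])"
      unfolding P_def by (rule degree_diff_le_max)
    also have "\<dots> \<le> p" using p2 degree_monom_le[of "1::'a" p] by simp
    finally show ?thesis .
  qed
  have roots: "{x. poly P x = 0} = {x::'a. x ^ p = x}"
    by (auto simp: P_def poly_monom)
  have c1: "card {x::'a. x ^ p = x} \<le> p"
    using card_poly_roots_bound[OF Pnz] degP roots by simp
  define S where "S = (of_nat ` {..<p} :: 'a set)"
  have cS: "card S = p"
    unfolding S_def
    by (subst card_image) (auto intro!: inj_onI simp: of_nat_eq_iff_cong_CHAR assms(2) cong_def)
  have sub: "S \<subseteq> {x::'a. x ^ p = x}"
    unfolding S_def using of_nat_pow_p[OF assms(1,2)] by auto
  have "S = {x::'a. x ^ p = x}"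
    by (rule card_seteq) (use sub cS c1 in auto)
  thus ?thesis using assms(3) unfolding S_def by auto
qed

definition ring_of :: "'a::field ring" where
  "ring_of = \<lparr> carrier = UNIV, monoid.mult = (\<lambda>x y. x * y), one = 1, ring.zero = 0, add = (\<lambda> x y. x + y) \<rparr>"

lemma field_ring_of: "field (ring_of :: 'a::field ring)"
proof -
  have "\<exists>y. x + y = 0" for x :: 'a
    using add.right_inverse by blast
  moreover have "x \<noteq> 0 \<Longrightarrow> \<exists>y. x * y = 1" for x :: 'a
    by (rule exI[of _ "inverse x"]) auto
  ultimately show ?thesis
    unfolding ring_of_def using add.right_inverse
    by unfold_locales (auto simp:algebra_simps Units_def)
qed

lemma ring_of_pow: "x [^]\<^bsub>ring_of\<^esub> (i::nat) = (x::'a::field) ^ i"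
  by (induction i) (auto simp: ring_of_def)

lemma finite_field_gen:
  "\<exists>g::'a::{finite,field}. \<forall>x. x \<noteq> 0 \<longrightarrow> (\<exists>i. x = g ^ i)"
proof -
  interpret field "ring_of :: 'a ring" by (rule field_ring_of)
  have fin: "finite (carrier (ring_of :: 'a ring))" by simp
  obtain a where a: "a \<in> carrier (Multiplicative_Group.mult_of (ring_of :: 'a ring))"
     "carrier (Multiplicative_Group.mult_of (ring_of :: 'a ring)) = {a[^]\<^bsub>ring_of\<^esub> i | i::nat . i \<in> UNIV}"
    using finite_field_mult_group_has_gen[OF fin] by (elim bexE) (rule that, assumption+)
  show ?thesis
  proof (rule exI[of _ a], intro allI impI)
    fix x :: 'a assume "x \<noteq> 0"
    hence "x \<in> carrier (Multiplicative_Group.mult_of (ring_of :: 'a ring))" by (simp add: ring_of_def Multiplicative_Group.carrier_mult_of)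
    then obtain i where "x = a [^]\<^bsub>ring_of\<^esub> (i::nat)" using a(2) by blast
    then show "\<exists>i. x = a ^ i" by (auto simp: ring_of_pow)
  qed
qed



lemma pow_mod_eq:
  assumes "(a::'a::monoid_mult) ^ k = 1"
  shows "a ^ j = a ^ (j mod k)"
proof -
  have "a ^ j = a ^ (k * (j div k) + j mod k)" by simp
  also have "\<dots> = (a ^ k) ^ (j div k) * a ^ (j mod k)" by (simp only: power_add power_mult)
  finally show ?thesis using assms by simp
qed

lemma finite_field_gen':
  "\<exists>g::'a::{finite,field}. g \<noteq> 0 \<and> (\<forall>x. x \<noteq> 0 \<longrightarrow> (\<exists>i. x = g ^ i))"
proof -
  obtain g :: 'a where g: "\<forall>x. x \<noteq> 0 \<longrightarrow> (\<exists>i. x = g ^ i)" using finite_field_gen by blast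
  show ?thesis
  proof (cases "g = 0")
    case False thus ?thesis using g by blast
  next
    case True
    have "x = 1" if "x \<noteq> 0" for x :: 'a
    proof -
      obtain i where "x = g ^ i" using g \<open>x \<noteq> 0\<close> by blast
      thus ?thesis using True that by (cases i) auto
    qed
    thus ?thesis by (intro exI[of _ 1]) auto
  qed
qed

lemma root_of_unity_exists:
  assumes "d > 0" "d dvd card (UNIV :: ('a::{finite,field}) set) - 1"
  shows "\<exists>z::'a. z ^ d = 1 \<and> (\<forall>j. z ^ j = 1 \<longrightarrow> d dvd j)"
proof -
  obtain g :: 'a where g0: "g \<noteq> 0" and g: "\<forall>x. x \<noteq> 0 \<longrightarrow> (\<exists>i. x = g ^ i)"
    using finite_field_gen' by blast
  define Q where "Q = card (UNIV :: 'a set) - 1"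
  have cq: "card (UNIV :: 'a set) \<ge> 2"
  proof -
    have "card {0::'a, 1} \<le> card (UNIV :: 'a set)" by (rule card_mono) auto
    thus ?thesis by simp
  qed
  hence Qpos: "Q > 0" unfolding Q_def by simp
  have cardQ: "card (UNIV - {0::'a}) = Q" unfolding Q_def by (simp add: card_Diff_singleton)
  have gQ: "g ^ Q = 1"
  proof -
    have "g ^ Suc Q = g" unfolding Q_def using cq power_card_same[of g] by (simp add: Suc_diff_le)
    thus ?thesis using g0 by simp
  qed
  have ord: "Q dvd j" if "g ^ j = 1" for j
  proof (rule ccontr)
    assume nd: "\<not> Q dvd j"
    define r where "r = j mod Q"
    have rpos: "r > 0" "r < Q" using nd Qpos unfolding r_def by (simp_all add: dvd_eq_mod_eq_0)
    have gr: "g ^ r = 1" using pow_mod_eq[OF gQ, of j] that unfolding r_def by simp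
    have "UNIV - {0::'a} \<subseteq> (\<lambda>i. g ^ i) ` {..<r}"
    proof
      fix x :: 'a assume "x \<in> UNIV - {0}"
      then obtain i where "x = g ^ i" using g by blast
      hence "x = g ^ (i mod r)" using pow_mod_eq[OF gr, of i] by simp
      thus "x \<in> (\<lambda>i. g ^ i) ` {..<r}" using rpos by auto
    qed
    hence "card (UNIV - {0::'a}) \<le> card ((\<lambda>i. g ^ i) ` {..<r})" by (intro card_mono) auto
    also have "\<dots> \<le> r" using card_image_le[of "{..<r}" "\<lambda>i. g ^ i"] by simp
    finally show False using cardQ rpos by simp
  qed
  obtain e where Qe: "Q = d * e" using assms(2) unfolding Q_def by blast
  have epos: "e > 0" using Qe Qpos by (cases e) auto
  show ?thesis
  proof (rule exI[of _ "g ^ e"], intro conjI allI impI)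
    show "(g ^ e) ^ d = 1" using gQ Qe by (simp add: power_mult[symmetric] mult.commute)
  next
    fix j assume "(g ^ e) ^ j = 1"
    hence "Q dvd e * j" using ord by (simp add: power_mult)
    hence "d * e dvd j * e" using Qe by (simp add: mult.commute)
    thus "d dvd j" using epos by simp
  qed
qed



definition aff :: "'a::field \<Rightarrow> 'a \<Rightarrow> 'a \<Rightarrow> 'a" where
  "aff a b = (\<lambda>x. a * x + b)"

lemma aff_eq_iff: "aff a b = aff a' b' \<longleftrightarrow> a = a' \<and> b = b'"
proof
  assume h: "aff a b = aff a' b'"
  have "aff a b 0 = aff a' b' 0" using h by simp
  hence b: "b = b'" by (simp add: aff_def)
  have "aff a b 1 = aff a' b' 1" using h by simp
  hence "a = a'" using b by (simp add: aff_def)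
  thus "a = a' \<and> b = b'" using b by simp
qed auto

lemma aff_app0: "aff a b 0 = b" by (simp add: aff_def)

lemma carrier_aff: "f \<in> carrier (affine_group d) \<longleftrightarrow> (\<exists>a b. a ^ d = 1 \<and> f = aff a b)"
  by (simp add: affine_group_def aff_def)

lemma aff_in_carrier [simp]: "aff a b \<in> carrier (affine_group d) \<longleftrightarrow> a ^ d = 1"
  by (auto simp: carrier_aff aff_eq_iff)

lemma carrier_affE:
  assumes "f \<in> carrier (affine_group d)"
  obtains a b where "a ^ d = 1" "f = aff a b"
  using assms by (auto simp: carrier_aff)

lemma mult_aff [simp]: "aff a b \<otimes>\<^bsub>affine_group d\<^esub> aff a' b' = aff (a * a') (a * b' + b)"
  by (simp add: affine_group_def aff_def fun_eq_iff algebra_simps)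

lemma one_aff: "\<one>\<^bsub>affine_group d\<^esub> = aff 1 0"
  by (simp add: affine_group_def aff_def fun_eq_iff)

lemma root_nz: "d > 0 \<Longrightarrow> (a::'a::field) ^ d = 1 \<Longrightarrow> a \<noteq> 0"
  by (cases d) auto

lemma group_affine:
  assumes "d > 0"
  shows "group (affine_group d :: ('a::field \<Rightarrow> 'a) monoid)"
proof (rule groupI)
  fix x y assume "x \<in> carrier (affine_group d :: ('a \<Rightarrow> 'a) monoid)" "y \<in> carrier (affine_group d :: ('a \<Rightarrow> 'a) monoid)"
  then show "x \<otimes>\<^bsub>affine_group d\<^esub> y \<in> carrier (affine_group d :: ('a \<Rightarrow> 'a) monoid)"
    by (auto elim!: carrier_affE simp: power_mult_distrib)
next
  show "\<one>\<^bsub>affine_group d\<^esub> \<in> carrier (affine_group d :: ('a \<Rightarrow> 'a) monoid)"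
    by (simp add: one_aff)
next
  fix x y z assume "x \<in> carrier (affine_group d :: ('a \<Rightarrow> 'a) monoid)" "y \<in> carrier (affine_group d :: ('a \<Rightarrow> 'a) monoid)"
     "z \<in> carrier (affine_group d :: ('a \<Rightarrow> 'a) monoid)"
  then show "x \<otimes>\<^bsub>affine_group d\<^esub> y \<otimes>\<^bsub>affine_group d\<^esub> z = x \<otimes>\<^bsub>affine_group d\<^esub> (y \<otimes>\<^bsub>affine_group d\<^esub> z)"
    by (auto elim!: carrier_affE simp: algebra_simps)
next
  fix x assume "x \<in> carrier (affine_group d :: ('a \<Rightarrow> 'a) monoid)"
  then show "\<one>\<^bsub>affine_group d\<^esub> \<otimes>\<^bsub>affine_group d\<^esub> x = x"
    by (auto elim!: carrier_affE simp: one_aff)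
next
  fix x assume "x \<in> carrier (affine_group d :: ('a \<Rightarrow> 'a) monoid)"
  then obtain a b where ab: "a ^ d = 1" "x = aff a b" by (auto simp: carrier_aff)
  have a0: "a \<noteq> 0" using root_nz[OF assms ab(1)] .
  show "\<exists>y\<in>carrier (affine_group d). y \<otimes>\<^bsub>affine_group d\<^esub> x = \<one>\<^bsub>affine_group d\<^esub>"
    by (rule bexI[of _ "aff (inverse a) (- (inverse a * b))"])
       (use ab a0 in \<open>auto simp: one_aff power_inverse\<close>)
qed

lemma inv_aff:
  assumes "d > 0" "(a::'a::field) ^ d = 1"
  shows "inv\<^bsub>affine_group d\<^esub> (aff a b) = aff (inverse a) (- (inverse a * b))"
proof -
  interpret group "affine_group d :: ('a \<Rightarrow> 'a) monoid" by (rule group_affine[OF assms(1)])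
  have a0: "a \<noteq> 0" using root_nz[OF assms] .
  show ?thesis
    by (rule inv_equality) (use assms a0 in \<open>auto simp: one_aff power_inverse\<close>)
qed

lemma pow_aff:
  "\<exists>c. aff (a::'a::field) b [^]\<^bsub>affine_group d\<^esub> (m::nat) = aff (a ^ m) c"
proof (induction m)
  case 0 then show ?case by (auto simp: one_aff)
next
  case (Suc m)
  then obtain c where "aff a b [^]\<^bsub>affine_group d\<^esub> m = aff (a ^ m) c" by blast
  then show ?case by (auto simp: mult.commute)
qed

lemma pow_trans:
  "aff (1::'a::field) b [^]\<^bsub>affine_group d\<^esub> (m::nat) = aff 1 (of_nat m * b)"
  by (induction m) (auto simp: one_aff algebra_simps)



lemma additive_sum:
  assumes "\<And>x y. f (x + y) = f x + f y" "f 0 = (0::'b::comm_monoid_add)"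
  shows "f (sum g A) = sum (\<lambda>i. f (g i)) (A::'c set)"
  by (induction A rule: infinite_finite_induct) (auto simp: assms)

lemma map_poly_mult_hom:
  fixes f :: "'a::comm_ring_1 \<Rightarrow> 'a"
  assumes "\<And>x y. f (x + y) = f x + f y" "\<And>x y. f (x * y) = f x * f y" "f 0 = 0"
  shows "map_poly f (P * Q) = map_poly f P * map_poly f Q"
proof (rule poly_eqI)
  fix n
  show "coeff (map_poly f (P * Q)) n = coeff (map_poly f P * map_poly f Q) n"
    by (simp add: coeff_map_poly assms(3) coeff_mult additive_sum[OF assms(1,3)] assms(2))
qed

lemma map_poly_prod_hom:
  fixes f :: "'a::comm_ring_1 \<Rightarrow> 'a"
  assumes "\<And>x y. f (x + y) = f x + f y" "\<And>x y. f (x * y) = f x * f y" "f 0 = 0" "f 1 = 1"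
  shows "map_poly f (\<Prod>i\<in>A. g i) = (\<Prod>i\<in>A. map_poly f (g i))"
  by (induction A rule: infinite_finite_induct) (auto simp: map_poly_mult_hom[OF assms(1-3)] assms(4))

lemma unit_pow_eq_one:
  assumes "(a::'a::field) ^ d = 1" "a ^ p = 1" "d dvd p ^ n - 1" "n \<ge> 1" "p > 0"
  shows "a = 1"
proof -
  have "p ^ n \<ge> 1" using assms(5) by simp
  obtain k where k0: "p ^ n - 1 = d * k" using assms(3) by (elim dvdE)
  have k: "p ^ n = Suc (d * k)" using k0 \<open>p ^ n \<ge> 1\<close> by simp
  have "a ^ (p ^ n) = a" unfolding k using assms(1) by (simp add: power_mult)
  moreover have "a ^ (p ^ n) = 1"
  proof -
    have "p ^ n = p * p ^ (n - 1)" using assms(4) by (simp add: power_eq_if)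
    thus ?thesis using assms(2) by (simp add: power_mult)
  qed
  ultimately show ?thesis by simp
qed



lemma conj_root:
  fixes z :: "'a::{finite,field}" and \<psi> :: "'a \<Rightarrow> 'a"
  assumes pr: "Factorial_Ring.prime p" and CH: "CHAR('a) = p"
    and padd: "\<And>b b'. \<psi> (b + b') = \<psi> b + \<psi> b'" and psi1: "\<psi> 1 \<noteq> 0"
    and semi: "\<And>b. \<psi> (z * b) = inverse z * \<psi> b"
  shows "\<exists>i. inverse z = z ^ (p ^ i)"
proof -
  have p0: "p > 0" using pr prime_gt_0_nat by blast
  have psi0: "\<psi> 0 = 0"
  proof -
    have "\<psi> 0 + \<psi> 0 = \<psi> 0 + 0" using padd[of 0 0] by simp
    thus ?thesis by (rule add_left_imp_eq)
  qed
  have psi_nat: "\<psi> (of_nat k * b) = of_nat k * \<psi> b" for k b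
    by (induction k) (auto simp: psi0 padd distrib_right)
  have psi_poly: "\<psi> (poly P z * b) = poly P (inverse z) * \<psi> b"
    if "\<forall>i. \<exists>k. coeff P i = of_nat k" for P b
    using that
  proof (induction P arbitrary: b)
    case 0 then show ?case by (simp add: psi0)
  next
    case (pCons a Q)
    obtain k where k: "a = of_nat k" using pCons.prems[rule_format, of 0] by auto
    have Q: "\<forall>i. \<exists>k. coeff Q i = of_nat k" using pCons.prems by (metis coeff_pCons_Suc)
    have "poly (pCons a Q) z * b = of_nat k * b + z * (poly Q z * b)" by (simp add: k algebra_simps)
    hence "\<psi> (poly (pCons a Q) z * b) = of_nat k * \<psi> b + inverse z * (poly Q (inverse z) * \<psi> b)"
      by (simp add: padd psi_nat semi pCons.IH[OF Q])
    thus ?case by (simp add: k algebra_simps)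
  qed
  define f where "f x = x ^ p" for x :: 'a
  have fadd: "f (x + y) = f x + f y" for x y using frob_add[OF pr CH, of x y 1] by (simp add: f_def)
  have fmult: "f (x * y) = f x * f y" for x y by (simp add: f_def power_mult_distrib)
  have f0: "f 0 = 0" using p0 by (simp add: f_def)
  have f1: "f 1 = 1" by (simp add: f_def)
  have fminus: "f (- x) = - f x" for x using frob_minus[OF pr CH, of x 1] by (simp add: f_def)
  have finj: "inj_on f A" for A by (rule inj_onI) (use frob_inj[OF pr CH, of _ 1] in \<open>auto simp: f_def\<close>)
  define Orb where "Orb = range (\<lambda>i::nat. z ^ (p ^ i))"
  have finOrb: "finite Orb" by simp
  have fOrb: "f ` Orb = Orb"
  proof (rule card_subset_eq)
    show "finite Orb" by simp
    show "f ` Orb \<subseteq> Orb"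
    proof
      fix y assume "y \<in> f ` Orb"
      then obtain i where "y = f (z ^ (p ^ i))" by (auto simp: Orb_def)
      hence "y = z ^ (p ^ Suc i)" by (simp add: f_def power_mult[symmetric] mult.commute)
      thus "y \<in> Orb" unfolding Orb_def by (rule range_eqI)
    qed
    show "card (f ` Orb) = card Orb" by (rule card_image[OF finj])
  qed
  define P where "P = (\<Prod>y\<in>Orb. [:- y, 1:])"
  have mapP: "map_poly f P = P"
  proof -
    have "map_poly f P = (\<Prod>y\<in>Orb. map_poly f [:- y, 1:])"
      unfolding P_def by (rule map_poly_prod_hom[OF fadd fmult f0 f1])
    also have "\<dots> = (\<Prod>y\<in>Orb. [:- f y, 1:])" by (simp add: map_poly_pCons f0 f1 fminus)
    also have "\<dots> = (\<Prod>y\<in>f ` Orb. [:- y, 1:])" by (rule prod.reindex[OF finj, symmetric, unfolded comp_def])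
    also have "\<dots> = P" by (simp add: fOrb P_def)
    finally show ?thesis .
  qed
  have coeffP: "\<forall>i. \<exists>k. coeff P i = of_nat k"
  proof
    fix i
    have "coeff P i = f (coeff P i)" using arg_cong[OF mapP, of "\<lambda>q. coeff q i"] by (simp add: coeff_map_poly f0)
    thus "\<exists>k. coeff P i = of_nat k" using prime_field_fixed[OF pr CH] by (simp add: f_def)
  qed
  have zOrb: "z \<in> Orb" unfolding Orb_def by (rule range_eqI[of _ _ 0]) simp
  have "poly P z = 0" unfolding P_def poly_prod using finOrb zOrb by (auto intro!: prod_zero)
  hence "\<psi> (poly P z * 1) = 0" by (simp add: psi0)
  hence "poly P (inverse z) * \<psi> 1 = 0" using psi_poly[OF coeffP, of 1] by simp
  hence "poly P (inverse z) = 0" using psi1 by simp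
  hence "\<exists>y\<in>Orb. inverse z = y" unfolding P_def poly_prod using finOrb by simp
  thus ?thesis by (auto simp: Orb_def)
qed



lemma only_if_dir:
  fixes p n d :: nat
  assumes pr: "Factorial_Ring.prime p"
    and card: "card (UNIV :: ('a::{finite,field}) set) = p ^ n"
    and d0: "d > 0" and dd: "d dvd p ^ n - 1"
    and GI: "GI_automorphism (affine_group d :: ('a \<Rightarrow> 'a) monoid) \<sigma>"
  shows "\<exists>l::nat. [int p ^ l = - 1] (mod int d)"
proof -
  let ?G = "affine_group d :: ('a \<Rightarrow> 'a) monoid"
  interpret group ?G by (rule group_affine[OF d0])
  have CH: "CHAR('a) = p" and n1: "n \<ge> 1" using char_eq_p[OF pr card] by auto
  have p0: "p > 0" using pr prime_gt_0_nat by blast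
  have iso: "\<sigma> \<in> iso ?G ?G" and gen: "generate ?G {g \<in> carrier ?G. \<sigma> g = inv\<^bsub>?G\<^esub> g} = carrier ?G"
    using GI unfolding GI_automorphism_def by auto
  have hom: "\<sigma> \<in> hom ?G ?G" using iso by (simp add: iso_def)
  have sc: "\<sigma> x \<in> carrier ?G" if "x \<in> carrier ?G" for x using hom that by (auto simp: hom_def)
  have sm: "\<sigma> (x \<otimes>\<^bsub>?G\<^esub> y) = \<sigma> x \<otimes>\<^bsub>?G\<^esub> \<sigma> y" if "x \<in> carrier ?G" "y \<in> carrier ?G" for x y
    using hom that by (auto simp: hom_def)
  have sinj: "inj_on \<sigma> (carrier ?G)" using iso by (auto simp: iso_def bij_betw_def)
  have s1: "\<sigma> (aff 1 0) = aff 1 0"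
    using hom_one[OF hom is_group is_group] by (simp add: one_aff)
  define \<psi> where "\<psi> b = \<sigma> (aff 1 b) 0" for b
  have strans: "\<sigma> (aff 1 b) = aff 1 (\<psi> b)" for b
  proof -
    have "aff 1 b \<in> carrier ?G" by simp
    then obtain a c where ac: "a ^ d = 1" "\<sigma> (aff 1 b) = aff a c" using sc by (blast elim: carrier_affE)
    have "aff 1 b [^]\<^bsub>?G\<^esub> p = aff 1 0"
      using pow_trans[where b=b and d=d and m=p] of_nat_eq_0_iff_char_dvd[where 'a='a and n=p] CH by simp
    hence "\<sigma> (aff 1 b [^]\<^bsub>?G\<^esub> p) = aff 1 0" using s1 by simp
    hence "aff a c [^]\<^bsub>?G\<^esub> p = aff 1 0"
      using hom_nat_pow[OF hom _ is_group is_group, of "aff 1 b" p] ac by simp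
    moreover obtain c' where "aff a c [^]\<^bsub>?G\<^esub> p = aff (a ^ p) c'" using pow_aff by blast
    ultimately have "a ^ p = 1" by (simp add: aff_eq_iff)
    hence "a = 1" using unit_pow_eq_one[OF ac(1) _ dd n1 p0] by blast
    thus ?thesis using ac by (simp add: \<psi>_def aff_app0)
  qed
  have psi_add: "\<psi> (b + b') = \<psi> b + \<psi> b'" for b b'
  proof -
    have "\<sigma> (aff 1 (b' + b)) = \<sigma> (aff 1 b) \<otimes>\<^bsub>?G\<^esub> \<sigma> (aff 1 b')" using sm[of "aff 1 b" "aff 1 b'"] by simp
    hence "\<psi> (b' + b) = \<psi> b' + \<psi> b" by (simp add: strans aff_eq_iff)
    thus ?thesis by (simp add: add.commute)
  qed
  have psi0: "\<psi> 0 = 0"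
  proof -
    have "\<psi> 0 + \<psi> 0 = \<psi> 0 + 0" using psi_add[of 0 0] by simp
    thus ?thesis by (rule add_left_imp_eq)
  qed
  have psi1: "\<psi> 1 \<noteq> 0"
  proof
    assume "\<psi> 1 = 0"
    hence "\<sigma> (aff 1 1) = \<sigma> (aff 1 0)" using strans s1 by simp
    hence "aff (1::'a) 1 = aff 1 0" using sinj by (auto dest: inj_onD)
    thus False by (simp add: aff_eq_iff)
  qed
  define \<alpha> where "\<alpha> a = \<sigma> (aff a 0) 1 - \<sigma> (aff a 0) 0" for a
  have salpha: "\<exists>c. \<sigma> (aff a 0) = aff (\<alpha> a) c" if ha: "a ^ d = 1" for a
  proof -
    have "\<sigma> (aff a 0) \<in> carrier ?G" using sc[of "aff a 0"] ha by simp
    then obtain a' c where "a' ^ d = 1" "\<sigma> (aff a 0) = aff a' c" by (rule carrier_affE)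
    thus ?thesis by (auto simp: \<alpha>_def aff_def)
  qed
  have alpha_root: "\<alpha> a ^ d = 1" if ha: "a ^ d = 1" for a
  proof -
    obtain c where "\<sigma> (aff a 0) = aff (\<alpha> a) c" using salpha ha by blast
    thus ?thesis using sc[of "aff a 0"] ha by simp
  qed
  have slin: "\<exists>c. \<sigma> (aff a b) = aff (\<alpha> a) c" if ha: "a ^ d = 1" for a b
  proof -
    have "aff a b = aff 1 b \<otimes>\<^bsub>?G\<^esub> aff a 0" by simp
    hence "\<sigma> (aff a b) = aff 1 (\<psi> b) \<otimes>\<^bsub>?G\<^esub> \<sigma> (aff a 0)" using sm[of "aff 1 b" "aff a 0"] ha strans by simp
    moreover obtain c where "\<sigma> (aff a 0) = aff (\<alpha> a) c" using salpha ha by blast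
    ultimately show ?thesis by auto
  qed
  have alpha_mult: "\<alpha> (a * a') = \<alpha> a * \<alpha> a'" if ha: "a ^ d = 1" and ha': "a' ^ d = 1" for a a'
  proof -
    have "aff (a * a') 0 = aff a 0 \<otimes>\<^bsub>?G\<^esub> aff a' 0" by simp
    hence "\<sigma> (aff (a * a') 0) = \<sigma> (aff a 0) \<otimes>\<^bsub>?G\<^esub> \<sigma> (aff a' 0)" using sm[of "aff a 0" "aff a' 0"] ha ha' by simp
    moreover obtain c where "\<sigma> (aff a 0) = aff (\<alpha> a) c" using salpha ha ha' by blast
    moreover obtain c' where "\<sigma> (aff a' 0) = aff (\<alpha> a') c'" using salpha ha ha' by blast
    moreover have "(a * a') ^ d = 1" using ha ha' by (simp add: power_mult_distrib)
    moreover obtain c'' where "\<sigma> (aff (a * a') 0) = aff (\<alpha> (a * a')) c''" using salpha calculation(4) by blast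
    ultimately show ?thesis by (simp add: aff_eq_iff)
  qed
  have alpha1: "\<alpha> 1 = 1" using s1 by (simp add: \<alpha>_def aff_def)
  have alpha_inv: "\<alpha> (inverse a) = inverse (\<alpha> a)" if ha: "a ^ d = 1" for a
  proof -
    have a0: "a \<noteq> 0" using root_nz[OF d0 ha] .
    have "\<alpha> a * \<alpha> (inverse a) = 1" using alpha_mult[OF that, of "inverse a"] ha a0 alpha1
      by (simp add: power_inverse)
    thus ?thesis by (rule inverse_unique[symmetric])
  qed
  define K where "K = {f \<in> carrier ?G. \<alpha> (f 1 - f 0) = inverse (f 1 - f 0)}"
  have Kaff: "aff a b \<in> K \<longleftrightarrow> a ^ d = 1 \<and> \<alpha> a = inverse a" for a b
  proof -
    have "aff a b 1 - aff a b 0 = a" by (simp add: aff_def)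
    thus ?thesis by (simp add: K_def)
  qed
  have subK: "subgroup K ?G"
  proof (rule subgroupI)
    show "K \<subseteq> carrier ?G" by (auto simp: K_def)
    show "K \<noteq> {}" using Kaff[of 1 0] alpha1 by auto
  next
    fix f assume "f \<in> K"
    then obtain a b where ab: "a ^ d = 1" "f = aff a b" "\<alpha> a = inverse a"
      by (auto simp: K_def elim!: carrier_affE simp: aff_def)
    show "inv\<^bsub>?G\<^esub> f \<in> K"
      using ab alpha_inv[OF ab(1)] by (simp add: inv_aff[OF d0] Kaff power_inverse)
  next
    fix f g assume "f \<in> K" "g \<in> K"
    then obtain a b a' b' where ab: "a ^ d = 1" "f = aff a b" "\<alpha> a = inverse a"
      "a' ^ d = 1" "g = aff a' b'" "\<alpha> a' = inverse a'"
      by (auto simp: K_def elim!: carrier_affE simp: aff_def)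
    show "f \<otimes>\<^bsub>?G\<^esub> g \<in> K"
      using ab alpha_mult[OF ab(1) ab(4)] by (simp add: Kaff power_mult_distrib)
  qed
  have SK: "{g \<in> carrier ?G. \<sigma> g = inv\<^bsub>?G\<^esub> g} \<subseteq> K"
  proof
    fix f assume "f \<in> {g \<in> carrier ?G. \<sigma> g = inv\<^bsub>?G\<^esub> g}"
    then obtain a b where ab: "a ^ d = 1" "f = aff a b" "\<sigma> f = inv\<^bsub>?G\<^esub> f"
      by (auto elim!: carrier_affE)
    obtain c where "\<sigma> (aff a b) = aff (\<alpha> a) c" using slin ab by blast
    hence "\<alpha> a = inverse a" using ab by (simp add: inv_aff[OF d0] aff_eq_iff)
    thus "f \<in> K" using ab Kaff by simp
  qed
  have "carrier ?G \<subseteq> K" using generate_subgroup_incl[OF SK subK] gen by simp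
  hence alpha_is_inv: "\<alpha> a = inverse a" if "a ^ d = 1" for a
    using that Kaff[of a 0] aff_in_carrier[of a 0 d] by blast
  have psi_semi: "\<psi> (a * b) = inverse a * \<psi> b" if ha: "a ^ d = 1" for a b
  proof -
    obtain c where c: "\<sigma> (aff a 0) = aff (inverse a) c" using salpha[OF ha] alpha_is_inv[OF ha] by auto
    have "aff a 0 \<otimes>\<^bsub>?G\<^esub> aff 1 b = aff 1 (a * b) \<otimes>\<^bsub>?G\<^esub> aff a 0" by simp
    hence "\<sigma> (aff a 0) \<otimes>\<^bsub>?G\<^esub> \<sigma> (aff 1 b) = \<sigma> (aff 1 (a * b)) \<otimes>\<^bsub>?G\<^esub> \<sigma> (aff a 0)"
      using sm ha by (metis aff_in_carrier power_one)
    thus ?thesis using c by (simp add: strans aff_eq_iff add.commute)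
  qed
  obtain z :: 'a where z: "z ^ d = 1" "\<And>j. z ^ j = 1 \<Longrightarrow> d dvd j"
    using root_of_unity_exists[of d, where 'a='a] d0 dd card by auto
  obtain i where i: "inverse z = z ^ (p ^ i)"
    using conj_root[OF pr CH psi_add psi1, of z] psi_semi[OF z(1)] by blast
  have z0: "z \<noteq> 0" using root_nz[OF d0 z(1)] .
  have "z ^ (p ^ i + 1) = 1" using i z0 by (simp add: field_simps)
  hence "d dvd p ^ i + 1" using z(2) by blast
  hence "int d dvd int p ^ i + 1" by (metis of_nat_1 of_nat_add of_nat_dvd_iff of_nat_power)
  hence "[int p ^ i = - 1] (mod int d)" by (simp add: cong_iff_dvd_diff)
  thus ?thesis by blast
qed



lemma GI_from_psi:
  fixes \<psi> :: "'a::field \<Rightarrow> 'a"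
  assumes d0: "d > 0"
    and padd: "\<And>u v. \<psi> (u + v) = \<psi> u + \<psi> v"
    and pinv: "\<And>u. \<psi> (\<psi> u) = u"
    and semi: "\<And>a u. a ^ d = 1 \<Longrightarrow> \<psi> (a * u) = inverse a * \<psi> u"
    and alt: "(\<forall>u. \<psi> u = u) \<or> (\<exists>z::'a. z ^ d = 1 \<and> z ^ 2 \<noteq> 1)"
  shows "\<exists>\<sigma>. GI_automorphism (affine_group d :: ('a \<Rightarrow> 'a) monoid) \<sigma>"
proof -
  let ?G = "affine_group d :: ('a \<Rightarrow> 'a) monoid"
  interpret group ?G by (rule group_affine[OF d0])
  have psi0: "\<psi> 0 = 0"
  proof -
    have "\<psi> 0 + \<psi> 0 = \<psi> 0 + 0" using padd[of 0 0] by simp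
    thus ?thesis by (rule add_left_imp_eq)
  qed
  have pminus: "\<psi> (- u) = - \<psi> u" for u
  proof -
    have "\<psi> (- u) + \<psi> u = 0" using padd[of "-u" u] psi0 by simp
    thus ?thesis by (simp add: eq_neg_iff_add_eq_0)
  qed
  define \<sigma> where "\<sigma> f = aff (inverse (f 1 - f 0)) (- \<psi> (f 0))" for f :: "'a \<Rightarrow> 'a"
  have saff: "\<sigma> (aff a b) = aff (inverse a) (- \<psi> b)" for a b by (simp add: \<sigma>_def aff_def)
  have sc: "\<sigma> f \<in> carrier ?G" if "f \<in> carrier ?G" for f
    using that by (auto elim!: carrier_affE simp: saff power_inverse)
  have ss: "\<sigma> (\<sigma> f) = f" if "f \<in> carrier ?G" for f
    using that by (auto elim!: carrier_affE simp: saff pminus pinv)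
  have hom: "\<sigma> \<in> hom ?G ?G"
  proof (rule homI)
    fix x assume "x \<in> carrier ?G" thus "\<sigma> x \<in> carrier ?G" by (rule sc)
  next
    fix x y assume "x \<in> carrier ?G" "y \<in> carrier ?G"
    then obtain a b a' b' where ab: "a ^ d = 1" "x = aff a b" "a' ^ d = 1" "y = aff a' b'"
      by (auto elim!: carrier_affE)
    show "\<sigma> (x \<otimes>\<^bsub>?G\<^esub> y) = \<sigma> x \<otimes>\<^bsub>?G\<^esub> \<sigma> y"
      using ab by (simp add: saff padd semi pminus aff_eq_iff algebra_simps)
  qed
  have bij: "bij_betw \<sigma> (carrier ?G) (carrier ?G)"
    by (rule bij_betwI[where g = \<sigma>]) (auto intro: sc ss)
  have iso: "\<sigma> \<in> iso ?G ?G" using hom bij by (simp add: iso_def)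
  define S where "S = {g \<in> carrier ?G. \<sigma> g = inv\<^bsub>?G\<^esub> g}"
  define H where "H = generate ?G S"
  have SG: "S \<subseteq> carrier ?G" by (auto simp: S_def)
  have subH: "subgroup H ?G" unfolding H_def by (rule generate_is_subgroup[OF SG])
  have SH: "S \<subseteq> H" unfolding H_def by (auto intro: generate.incl)
  have inv1: "inv\<^bsub>?G\<^esub> (aff 1 u) = aff 1 (- u)" for u
    using inv_aff[OF d0, of 1 u] by simp
  have H_aff0: "aff a 0 \<in> H" if ha: "a ^ d = 1" for a
  proof -
    have "aff a 0 \<in> S" using ha by (simp add: S_def saff psi0 inv_aff[OF d0 ha])
    thus ?thesis using SH by blast
  qed
  have H_W: "aff 1 w \<in> H" if hw: "\<psi> w = w" for w
  proof -
    have "aff 1 w \<in> S" using hw by (simp add: S_def saff inv1)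
    thus ?thesis using SH by blast
  qed
  define V where "V = {u. aff 1 u \<in> H}"
  have Vadd: "u + v \<in> V" if "u \<in> V" "v \<in> V" for u v
  proof -
    have "aff 1 v \<otimes>\<^bsub>?G\<^esub> aff 1 u \<in> H" using that subgroup.m_closed[OF subH, of "aff 1 v" "aff 1 u"] by (simp add: V_def)
    thus ?thesis by (simp add: V_def)
  qed
  have Vneg: "- u \<in> V" if "u \<in> V" for u
    using that subgroup.m_inv_closed[OF subH, of "aff 1 u"] by (simp add: V_def inv1)
  have Vmul: "a * u \<in> V" if ha: "a ^ d = 1" and hu: "u \<in> V" for a u
  proof -
    have a0: "a \<noteq> 0" using root_nz[OF d0 ha] .
    have h1: "aff a 0 \<otimes>\<^bsub>?G\<^esub> aff 1 u \<in> H"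
      by (rule subgroup.m_closed[OF subH H_aff0[OF ha]]) (use hu in \<open>simp add: V_def\<close>)
    have h2: "inv\<^bsub>?G\<^esub> (aff a 0) \<in> H" by (rule subgroup.m_inv_closed[OF subH H_aff0[OF ha]])
    have "aff a 0 \<otimes>\<^bsub>?G\<^esub> aff 1 u \<otimes>\<^bsub>?G\<^esub> inv\<^bsub>?G\<^esub> (aff a 0) \<in> H"
      by (rule subgroup.m_closed[OF subH h1 h2])
    moreover have "aff a 0 \<otimes>\<^bsub>?G\<^esub> aff 1 u \<otimes>\<^bsub>?G\<^esub> inv\<^bsub>?G\<^esub> (aff a 0) = aff 1 (a * u)"
      using a0 by (simp add: inv_aff[OF d0 ha])
    ultimately show ?thesis by (simp add: V_def)
  qed
  have Vall: "v \<in> V" for v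
  proof (cases "\<forall>u. \<psi> u = u")
    case True thus ?thesis using H_W by (simp add: V_def)
  next
    case False
    then obtain z :: 'a where z: "z ^ d = 1" "z ^ 2 \<noteq> 1" using alt False by (meson)
    have z0: "z \<noteq> 0" using root_nz[OF d0 z(1)] .
    define c where "c = z - inverse z"
    have c0: "c \<noteq> 0"
    proof
      assume "c = 0"
      hence "z = inverse z" by (simp add: c_def)
      hence "z * z = 1" using z0 by (metis right_inverse)
      thus False using z(2) by (simp add: power2_eq_square)
    qed
    have cV: "c * y \<in> V" for y
    proof -
      define u where "u = \<psi> y"
      define w1 where "w1 = u + \<psi> u"
      define w2 where "w2 = z * u + \<psi> (z * u)"
      have w1V: "w1 \<in> V" using H_W[of w1] by (simp add: V_def w1_def padd pinv add.commute)
      have w2V: "w2 \<in> V" using H_W[of w2] by (simp add: V_def w2_def padd pinv add.commute)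
      have "z * w1 + - w2 \<in> V" using Vadd Vmul[OF z(1) w1V] Vneg[OF w2V] by blast
      moreover have "z * w1 + - w2 = c * y"
        by (simp add: w1_def w2_def c_def semi[OF z(1)] u_def pinv algebra_simps)
      ultimately show ?thesis by simp
    qed
    have "c * (inverse c * v) \<in> V" by (rule cV)
    moreover have "c * (inverse c * v) = v" using c0 by (simp add: mult.assoc[symmetric])
    ultimately show ?thesis by simp
  qed
  have "carrier ?G \<subseteq> H"
  proof
    fix f assume "f \<in> carrier ?G"
    then obtain a b where ab: "a ^ d = 1" "f = aff a b" by (auto elim!: carrier_affE)
    have "aff 1 b \<otimes>\<^bsub>?G\<^esub> aff a 0 \<in> H"
      by (rule subgroup.m_closed[OF subH _ H_aff0[OF ab(1)]]) (use Vall[of b] in \<open>simp add: V_def\<close>)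
    thus "f \<in> H" using ab by simp
  qed
  moreover have "H \<subseteq> carrier ?G" using subgroup.subset[OF subH] .
  ultimately have "generate ?G S = carrier ?G" unfolding H_def by blast
  thus ?thesis using iso unfolding GI_automorphism_def S_def by blast
qed



definition good :: "'a::field set \<Rightarrow> ('a \<Rightarrow> 'a) \<Rightarrow> 'a set \<Rightarrow> ('a \<Rightarrow> 'a) \<Rightarrow> bool" where
  "good E \<tau> U \<psi> \<longleftrightarrow> 0 \<in> U \<and> (\<forall>u\<in>U. \<forall>v\<in>U. u + v \<in> U) \<and> (\<forall>e\<in>E. \<forall>u\<in>U. e * u \<in> U)
     \<and> (\<forall>u\<in>U. \<psi> u \<in> U) \<and> (\<forall>u\<in>U. \<forall>v\<in>U. \<psi> (u + v) = \<psi> u + \<psi> v)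
     \<and> (\<forall>e\<in>E. \<forall>u\<in>U. \<psi> (e * u) = \<tau> e * \<psi> u) \<and> (\<forall>u\<in>U. \<psi> (\<psi> u) = u)"

lemma good_step:
  fixes E :: "'a::field set"
  assumes E0: "0 \<in> E" and E1: "1 \<in> E" and Eadd: "\<And>x y. x \<in> E \<Longrightarrow> y \<in> E \<Longrightarrow> x + y \<in> E"
    and Eneg: "\<And>x. x \<in> E \<Longrightarrow> - x \<in> E"
    and Emul: "\<And>x y. x \<in> E \<Longrightarrow> y \<in> E \<Longrightarrow> x * y \<in> E" and Einv: "\<And>x. x \<in> E \<Longrightarrow> inverse x \<in> E"
    and tE: "\<And>x. x \<in> E \<Longrightarrow> \<tau> x \<in> E" and tt: "\<And>x. x \<in> E \<Longrightarrow> \<tau> (\<tau> x) = x"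
    and tadd: "\<And>x y. \<tau> (x + y) = \<tau> x + \<tau> y" and tmul: "\<And>x y. \<tau> (x * y) = \<tau> x * \<tau> y"
    and g: "good E \<tau> U \<psi>" and x: "x \<notin> U"
  shows "\<exists>\<psi>'. good E \<tau> {u + e * x | u e. u \<in> U \<and> e \<in> E} \<psi>'"
proof -
  define U' where "U' = {u + e * x | u e. u \<in> U \<and> e \<in> E}"
  have U0: "0 \<in> U" and Uadd: "\<And>u v. u \<in> U \<Longrightarrow> v \<in> U \<Longrightarrow> u + v \<in> U"
    and Umul: "\<And>e u. e \<in> E \<Longrightarrow> u \<in> U \<Longrightarrow> e * u \<in> U"
    and pU: "\<And>u. u \<in> U \<Longrightarrow> \<psi> u \<in> U"
    and padd: "\<And>u v. u \<in> U \<Longrightarrow> v \<in> U \<Longrightarrow> \<psi> (u + v) = \<psi> u + \<psi> v"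
    and pmul: "\<And>e u. e \<in> E \<Longrightarrow> u \<in> U \<Longrightarrow> \<psi> (e * u) = \<tau> e * \<psi> u"
    and pp: "\<And>u. u \<in> U \<Longrightarrow> \<psi> (\<psi> u) = u"
    using g unfolding good_def by auto
  have Uneg: "- u \<in> U" if "u \<in> U" for u
    using Umul[OF Eneg[OF E1] that] by simp
  have uniq: "u = u' \<and> e = e'" if "u \<in> U" "e \<in> E" "u' \<in> U" "e' \<in> E" "u + e * x = u' + e' * x" for u e u' e'
  proof (cases "e = e'")
    case True thus ?thesis using that by simp
  next
    case False
    have ee: "e - e' \<in> E" using Eadd[OF that(2) Eneg[OF that(4)]] by simp
    have "(e - e') * x = u' - u" using that(5) by (simp add: algebra_simps)
    hence "x = inverse (e - e') * (u' - u)" using False by (simp add: field_simps)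
    moreover have "inverse (e - e') * (u' - u) \<in> U"
      using Umul[OF Einv[OF ee] Uadd[OF that(3) Uneg[OF that(1)]]] by simp
    ultimately show ?thesis using x by simp
  qed
  define \<psi>' where "\<psi>' v = (SOME w. \<exists>u e. u \<in> U \<and> e \<in> E \<and> v = u + e * x \<and> w = \<psi> u + \<tau> e * x)" for v
  have p'eq: "\<psi>' (u + e * x) = \<psi> u + \<tau> e * x" if "u \<in> U" "e \<in> E" for u e
    unfolding \<psi>'_def
  proof (rule some_equality)
    show "\<exists>u' e'. u' \<in> U \<and> e' \<in> E \<and> u + e * x = u' + e' * x \<and> \<psi> u + \<tau> e * x = \<psi> u' + \<tau> e' * x"
      using that by blast
  next
    fix w assume "\<exists>u' e'. u' \<in> U \<and> e' \<in> E \<and> u + e * x = u' + e' * x \<and> w = \<psi> u' + \<tau> e' * x"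
    then obtain u' e' where "u' \<in> U" "e' \<in> E" "u + e * x = u' + e' * x" "w = \<psi> u' + \<tau> e' * x" by blast
    thus "w = \<psi> u + \<tau> e * x" using uniq[OF that] by auto
  qed
  have "good E \<tau> U' \<psi>'"
    unfolding good_def
  proof (intro conjI ballI)
    show "0 \<in> U'" unfolding U'_def using U0 E0 by force
  next
    fix v w assume "v \<in> U'" "w \<in> U'"
    then obtain u e u' e' where h: "u \<in> U" "e \<in> E" "v = u + e * x" "u' \<in> U" "e' \<in> E" "w = u' + e' * x"
      unfolding U'_def by blast
    have vw: "v + w = (u + u') + (e + e') * x" using h by (simp add: algebra_simps)
    show "v + w \<in> U'" unfolding U'_def using vw Uadd[OF h(1,4)] Eadd[OF h(2,5)] by blast
    have "\<psi>' (v + w) = \<psi> (u + u') + \<tau> (e + e') * x"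
      unfolding vw by (rule p'eq[OF Uadd[OF h(1,4)] Eadd[OF h(2,5)]])
    also have "\<dots> = (\<psi> u + \<tau> e * x) + (\<psi> u' + \<tau> e' * x)"
      using padd[OF h(1,4)] tadd[of e e'] by (simp add: algebra_simps)
    also have "\<dots> = \<psi>' v + \<psi>' w" using h p'eq by simp
    finally show "\<psi>' (v + w) = \<psi>' v + \<psi>' w" .
  next
    fix f v assume f: "f \<in> E" and "v \<in> U'"
    then obtain u e where h: "u \<in> U" "e \<in> E" "v = u + e * x" unfolding U'_def by blast
    have fv: "f * v = f * u + (f * e) * x" using h by (simp add: algebra_simps)
    show "f * v \<in> U'" unfolding U'_def using fv Umul[OF f h(1)] Emul[OF f h(2)] by blast
    have "\<psi>' (f * v) = \<psi> (f * u) + \<tau> (f * e) * x"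
      unfolding fv by (rule p'eq[OF Umul[OF f h(1)] Emul[OF f h(2)]])
    also have "\<dots> = \<tau> f * (\<psi> u + \<tau> e * x)"
      using pmul[OF f h(1)] tmul[of f e] by (simp add: algebra_simps)
    also have "\<dots> = \<tau> f * \<psi>' v" using h p'eq by simp
    finally show "\<psi>' (f * v) = \<tau> f * \<psi>' v" .
  next
    fix v assume "v \<in> U'"
    then obtain u e where h: "u \<in> U" "e \<in> E" "v = u + e * x" unfolding U'_def by blast
    show "\<psi>' v \<in> U'" unfolding U'_def using h p'eq pU tE by blast
    show "\<psi>' (\<psi>' v) = v" using h by (simp add: p'eq pU tE pp tt)
  qed
  thus ?thesis unfolding U'_def by blast
qed

lemma psi_exists:
  fixes E :: "'a::{finite,field} set"
  assumes E0: "0 \<in> E" and E1: "1 \<in> E" and Eadd: "\<And>x y. x \<in> E \<Longrightarrow> y \<in> E \<Longrightarrow> x + y \<in> E"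
    and Eneg: "\<And>x. x \<in> E \<Longrightarrow> - x \<in> E"
    and Emul: "\<And>x y. x \<in> E \<Longrightarrow> y \<in> E \<Longrightarrow> x * y \<in> E" and Einv: "\<And>x. x \<in> E \<Longrightarrow> inverse x \<in> E"
    and tE: "\<And>x. x \<in> E \<Longrightarrow> \<tau> x \<in> E" and tt: "\<And>x. x \<in> E \<Longrightarrow> \<tau> (\<tau> x) = x"
    and tadd: "\<And>x y. \<tau> (x + y) = \<tau> x + \<tau> y" and tmul: "\<And>x y. \<tau> (x * y) = \<tau> x * \<tau> y"
  shows "\<exists>\<psi>. (\<forall>u v. \<psi> (u + v) = \<psi> u + \<psi> v) \<and> (\<forall>u. \<psi> (\<psi> u) = u) \<and> (\<forall>e\<in>E. \<forall>u. \<psi> (e * u) = \<tau> e * \<psi> u)"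
proof -
  have claim: "\<exists>U \<psi>. good E \<tau> U \<psi> \<and> (N \<le> card U \<or> U = UNIV)" for N
  proof (induction N)
    case 0
    have "good E \<tau> {0} (\<lambda>_. 0)" unfolding good_def by simp
    thus ?case by blast
  next
    case (Suc N)
    then obtain U \<psi> where g: "good E \<tau> U \<psi>" and c: "N \<le> card U \<or> U = UNIV" by blast
    show ?case
    proof (cases "U = UNIV")
      case True thus ?thesis using g by blast
    next
      case False
      then obtain x where x: "x \<notin> U" by blast
      define U' where "U' = {u + e * x | u e. u \<in> U \<and> e \<in> E}"
      have "\<exists>\<psi>'. good E \<tau> U' \<psi>'" unfolding U'_def
        by (rule good_step[where E=E and \<tau>=\<tau> and U=U and \<psi>=\<psi> and x=x])
           (auto simp: tt tadd tmul x intro: E0 E1 Eadd Eneg Emul Einv tE g)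
      then obtain \<psi>' where g': "good E \<tau> U' \<psi>'" by blast
      have "U \<subseteq> U'" unfolding U'_def using E0 by force
      moreover have "x \<in> U'" unfolding U'_def using E1 g unfolding good_def by force
      ultimately have "insert x U \<subseteq> U'" by blast
      hence "card (insert x U) \<le> card U'" by (intro card_mono) auto
      hence "Suc (card U) \<le> card U'" using x by simp
      thus ?thesis using g' c False by auto
    qed
  qed
  obtain U \<psi> where g: "good E \<tau> U \<psi>" and c: "Suc (card (UNIV :: 'a set)) \<le> card U \<or> U = UNIV"
    using claim by blast
  have "card U \<le> card (UNIV :: 'a set)" by (intro card_mono) auto
  hence "U = UNIV" using c by auto
  thus ?thesis using g unfolding good_def by auto
qed



lemma if_dir:
  fixes p n d :: nat
  assumes pr: "Factorial_Ring.prime p"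
    and card: "card (UNIV :: ('a::{finite,field}) set) = p ^ n"
    and d0: "d > 0" and dd: "d dvd p ^ n - 1"
    and cg: "[int p ^ l = - 1] (mod int d)"
  shows "\<exists>\<sigma>. GI_automorphism (affine_group d :: ('a \<Rightarrow> 'a) monoid) \<sigma>"
proof -
  have CH: "CHAR('a) = p" and n1: "n \<ge> 1" using char_eq_p[OF pr card] by auto
  have p0: "p > 0" using pr prime_gt_0_nat by blast
  have "int d dvd int p ^ l - (- 1)" using cg by (simp add: cong_iff_dvd_diff)
  hence "int d dvd int (p ^ l + 1)" by (simp add: add.commute)
  hence dN: "d dvd p ^ l + 1" by (simp only: of_nat_dvd_iff)
  show ?thesis
  proof (cases "d \<le> 2")
    case True
    have semi: "(\<lambda>u. u) (a * u) = inverse a * (\<lambda>u. u) u" if ha: "(a::'a) ^ d = 1" for a u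
    proof -
      have "a * a = 1"
      proof (cases "d = 1")
        case True thus ?thesis using ha by simp
      next
        case False hence "d = 2" using \<open>d \<le> 2\<close> d0 by simp
        thus ?thesis using ha by (simp add: power2_eq_square)
      qed
      hence "inverse a = a" by (metis inverse_unique)
      thus ?thesis by simp
    qed
    show ?thesis
    proof (rule GI_from_psi[OF d0, of "\<lambda>u. u"])
      show "(\<lambda>u. u) (a * u) = inverse a * (\<lambda>u. u) u" if "a ^ d = 1" for a u :: 'a using semi[OF that] .
    qed auto
  next
    case False
    define N where "N = p ^ l"
    have N0: "N > 0" using p0 by (simp add: N_def)
    define \<tau> where "\<tau> x = x ^ N" for x :: 'a
    define E where "E = {e. \<tau> (\<tau> e) = e}"
    have tadd: "\<tau> (x + y) = \<tau> x + \<tau> y" for x y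
      unfolding \<tau>_def N_def by (rule frob_add[OF pr CH])
    have tmul: "\<tau> (x * y) = \<tau> x * \<tau> y" for x y by (simp add: \<tau>_def power_mult_distrib)
    have tneg: "\<tau> (- x) = - \<tau> x" for x unfolding \<tau>_def N_def by (rule frob_minus[OF pr CH])
    have tinv: "\<tau> (inverse x) = inverse (\<tau> x)" for x by (simp add: \<tau>_def power_inverse)
    have t0: "\<tau> 0 = 0" using N0 by (simp add: \<tau>_def)
    have t1: "\<tau> 1 = 1" by (simp add: \<tau>_def)
    have mu: "\<tau> a = inverse a" if ha: "a ^ d = 1" for a
    proof -
      obtain k where k: "N + 1 = d * k" using dN unfolding N_def by (elim dvdE)
      have "a ^ (N + 1) = 1" unfolding k using ha by (simp add: power_mult)
      hence "a ^ N * a = 1" by (simp add: mult.commute)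
      thus ?thesis unfolding \<tau>_def by (metis inverse_unique mult.commute)
    qed
    have "\<exists>\<psi>. (\<forall>u v. \<psi> (u + v) = \<psi> u + \<psi> v) \<and> (\<forall>u. \<psi> (\<psi> u) = u) \<and> (\<forall>e\<in>E. \<forall>u. \<psi> (e * u) = \<tau> e * \<psi> u)"
    proof (rule psi_exists)
      show "0 \<in> E" by (simp add: E_def t0)
      show "1 \<in> E" by (simp add: E_def t1)
      show "x + y \<in> E" if "x \<in> E" "y \<in> E" for x y using that by (simp add: E_def tadd)
      show "- x \<in> E" if "x \<in> E" for x using that by (simp add: E_def tneg)
      show "x * y \<in> E" if "x \<in> E" "y \<in> E" for x y using that by (simp add: E_def tmul)
      show "inverse x \<in> E" if "x \<in> E" for x using that by (simp add: E_def tinv)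
      show "\<tau> x \<in> E" if "x \<in> E" for x using that by (simp add: E_def)
      show "\<tau> (\<tau> x) = x" if "x \<in> E" for x using that by (simp add: E_def)
      show "\<tau> (x + y) = \<tau> x + \<tau> y" for x y by (rule tadd)
      show "\<tau> (x * y) = \<tau> x * \<tau> y" for x y by (rule tmul)
    qed
    then obtain \<psi> where psi: "\<forall>u v. \<psi> (u + v) = \<psi> u + \<psi> v" "\<forall>u. \<psi> (\<psi> u) = u"
        "\<forall>e\<in>E. \<forall>u. \<psi> (e * u) = \<tau> e * \<psi> u" by blast
    have semi: "\<psi> (a * u) = inverse a * \<psi> u" if ha: "a ^ d = 1" for a u
    proof -
      have "a \<in> E" using mu[OF ha] ha by (simp add: E_def tinv)
      thus ?thesis using psi(3) mu[OF ha] by simp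
    qed
    obtain z :: 'a where z: "z ^ d = 1" "\<And>j. z ^ j = 1 \<Longrightarrow> d dvd j"
      using root_of_unity_exists[of d, where 'a='a] d0 dd card by auto
    have "z ^ 2 \<noteq> 1"
    proof
      assume "z ^ 2 = 1"
      hence "d dvd 2" using z(2) by blast
      thus False using False by (simp add: dvd_imp_le)
    qed
    show ?thesis
    proof (rule GI_from_psi[OF d0, of \<psi>])
      show "\<psi> (u + v) = \<psi> u + \<psi> v" for u v using psi(1) by blast
      show "\<psi> (\<psi> u) = u" for u using psi(2) by blast
      show "\<psi> (a * u) = inverse a * \<psi> u" if "a ^ d = 1" for a u using semi[OF that] .
      show "(\<forall>u. \<psi> u = u) \<or> (\<exists>z::'a. z ^ d = 1 \<and> z ^ 2 \<noteq> 1)" using z(1) \<open>z ^ 2 \<noteq> 1\<close> by blast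
    qed
  qed
qed


theorem theorem3p6:
  fixes p n d :: nat
  assumes "Factorial_Ring.prime p"
    and "card (UNIV :: ('a::{finite,field}) set) = p ^ n"
    and "d > 0" and "d dvd p ^ n - 1"
  shows "(\<exists>\<sigma>. GI_automorphism (affine_group d :: ('a \<Rightarrow> 'a) monoid) \<sigma>)
         \<longleftrightarrow> (\<exists>l::nat. [int p ^ l = - 1] (mod int d))"
proof
  assume "\<exists>\<sigma>. GI_automorphism (affine_group d :: ('a \<Rightarrow> 'a) monoid) \<sigma>"
  then obtain \<sigma> where "GI_automorphism (affine_group d :: ('a \<Rightarrow> 'a) monoid) \<sigma>" by blast
  thus "\<exists>l::nat. [int p ^ l = - 1] (mod int d)" by (rule only_if_dir[OF assms])
next
  assume "\<exists>l::nat. [int p ^ l = - 1] (mod int d)"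
  then obtain l :: nat where "[int p ^ l = - 1] (mod int d)" by blast
  thus "\<exists>\<sigma>. GI_automorphism (affine_group d :: ('a \<Rightarrow> 'a) monoid) \<sigma>" by (rule if_dir[OF assms])
qed

end
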